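(* $\mathfrak{L}(\mathbf{F}_2)^w_{O(n)} \subsetneq \mathfrak{L}(\mathbf{F}_2\times\mathbf{F}_2)^w_{O(n)}$.
   Context: For a group $G$ with identity $e$, a $G$-automaton is a tuple $(Q,\Sigma,G,\delta,q_0,Q_a)$ where $Q$ is a finite set of states, $\Sigma$ a finite input alphabet, $q_0\in Q$ the initial state, $Q_a\subseteq Q$ the accepting states, and $\delta$ assigns to each $(q,\sigma)\in Q\times(\Sigma\cup\{\varepsilon\})$ a finite set of pairs $(q',m)\in Q\times G$. The register holds an element of $G$, initially $e$; using a transition $(q',m)\in\delta(q,\sigma)$ (one step) the automaton reads $\sigma$ (or nothing), moves to $q'$ and replaces the register content $x$ by $xm$. A word is accepted if some computation reads it entirely and ends in an accepting state with register equal to $e$. A $G$-automaton recognizing $\mathtt{L}$ is weakly $t(n)$ time-bounded if every $x\in\mathtt{L}$ with $|x|=n$ has an accepting computation of at most $t(n)$ steps; $\mathfrak{L}(G)^w_{O(n)}$ is the class of languages recognized by weakly $t(n)$ time-bounded $G$-automata for some $t(n)=O(n)$. $\mathbf{F}_2$ is the free group of rank 2. *)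

theory Defs
  imports "HOL-Algebra.Group"
begin

text \<open>Letters: (generator, sign); generator False = a, True = b; sign True = positive.
  Elements are freely reduced words; multiplication is concatenation followed by free reduction.\<close>

type_synonym f2letter = "bool \<times> bool"

definition cancels :: "f2letter \<Rightarrow> f2letter \<Rightarrow> bool" where
  "cancels x y \<longleftrightarrow> fst x = fst y \<and> snd x \<noteq> snd y"

fun freely_reduced :: "f2letter list \<Rightarrow> bool" where
  "freely_reduced (x # y # ys) = (\<not> cancels x y \<and> freely_reduced (y # ys))"
| "freely_reduced _ = True"

fun push :: "f2letter \<Rightarrow> f2letter list \<Rightarrow> f2letter list" where
  "push x [] = [x]"
| "push x (y # ys) = (if cancels x y then ys else x # y # ys)"

definition F2 :: "f2letter list monoid" where
  "F2 = \<lparr>carrier = {w. freely_reduced w}, mult = (\<lambda>u v. foldr push u v), one = []\<rparr>"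

record ('q, 's, 'g) gautomaton =
  states :: "'q set"
  alphabet :: "'s set"
  init :: 'q
  accepting :: "'q set"
  trans :: "('q \<times> 's option \<times> 'q \<times> 'g) set"
    \<comment> \<open>(q, \<sigma>, q', m) means (q', m) \<in> \<delta>(q, \<sigma>); None stands for \<epsilon>\<close>

definition wf_gaut :: "('g, 'x) monoid_scheme \<Rightarrow> ('q, 's, 'g) gautomaton \<Rightarrow> bool" where
  "wf_gaut G A \<longleftrightarrow> finite (states A) \<and> finite (alphabet A) \<and> finite (trans A)
     \<and> init A \<in> states A \<and> accepting A \<subseteq> states A
     \<and> (\<forall>(q, s, q', m) \<in> trans A. q \<in> states A \<and> q' \<in> states A \<and> m \<in> carrier G
          \<and> (\<forall>a. s = Some a \<longrightarrow> a \<in> alphabet A))"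

inductive gpath :: "('q, 's, 'g) gautomaton \<Rightarrow> 'q \<Rightarrow> ('q \<times> 's option \<times> 'q \<times> 'g) list \<Rightarrow> 'q \<Rightarrow> bool"
  for A where
  nil: "gpath A q [] q"
| step: "(q, s, q', m) \<in> trans A \<Longrightarrow> gpath A q' ts q'' \<Longrightarrow> gpath A q ((q, s, q', m) # ts) q''"

definition read_word :: "('q \<times> 's option \<times> 'q \<times> 'g) list \<Rightarrow> 's list" where
  "read_word ts = concat (map (\<lambda>(_, s, _, _). case s of None \<Rightarrow> [] | Some a \<Rightarrow> [a]) ts)"

definition register :: "('g, 'x) monoid_scheme \<Rightarrow> ('q \<times> 's option \<times> 'q \<times> 'g) list \<Rightarrow> 'g" where
  "register G ts = foldl (\<lambda>x (_, _, _, m). x \<otimes>\<^bsub>G\<^esub> m) \<one>\<^bsub>G\<^esub> ts"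

definition accepting_comp :: "('g, 'x) monoid_scheme \<Rightarrow> ('q, 's, 'g) gautomaton \<Rightarrow> 's list
    \<Rightarrow> ('q \<times> 's option \<times> 'q \<times> 'g) list \<Rightarrow> bool" where
  "accepting_comp G A w ts \<longleftrightarrow> (\<exists>q. gpath A (init A) ts q \<and> q \<in> accepting A
       \<and> read_word ts = w \<and> register G ts = \<one>\<^bsub>G\<^esub>)"

definition gaut_lang :: "('g, 'x) monoid_scheme \<Rightarrow> ('q, 's, 'g) gautomaton \<Rightarrow> 's list set" where
  "gaut_lang G A = {w. \<exists>ts. accepting_comp G A w ts}"

definition weakly_time_bounded ::
    "('g, 'x) monoid_scheme \<Rightarrow> ('q, 's, 'g) gautomaton \<Rightarrow> (nat \<Rightarrow> nat) \<Rightarrow> bool" where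
  "weakly_time_bounded G A t \<longleftrightarrow>
     (\<forall>w \<in> gaut_lang G A. \<exists>ts. accepting_comp G A w ts \<and> length ts \<le> t (length w))"

definition linear_bound :: "(nat \<Rightarrow> nat) \<Rightarrow> bool" where
  "linear_bound t \<longleftrightarrow> (\<exists>c. \<forall>n. t n \<le> c * n + c)"

text \<open>The class of languages (over letters of type 's) recognized by weakly linear-time
  bounded G-automata; state sets are drawn from nat (any finite state set can be renamed).\<close>
definition weak_lin_class :: "('g, 'x) monoid_scheme \<Rightarrow> 's list set set" where
  "weak_lin_class G = {L. \<exists>(A :: (nat, 's, 'g) gautomaton) t.
      wf_gaut G A \<and> gaut_lang G A = L \<and> linear_bound t \<and> weakly_time_bounded G A t}"

end

theory Submission
  imports Defs
begin


lemma cancels_sym: "cancels x y \<Longrightarrow> cancels y x"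
  by (auto simp: cancels_def)

lemma cancels_eq: "cancels a y \<Longrightarrow> cancels y z \<Longrightarrow> a = z"
  by (cases a; cases y; cases z) (auto simp: cancels_def)

lemma fr_tl: "freely_reduced (y # ys) \<Longrightarrow> freely_reduced ys"
  by (cases ys) auto

lemma fr_push: "freely_reduced v \<Longrightarrow> freely_reduced (push a v)"
  by (cases v) (auto dest: fr_tl)

lemma fr_foldr: "freely_reduced v \<Longrightarrow> freely_reduced (foldr push u v)"
  by (induction u) (auto intro: fr_push)

lemma push_cancel:
  assumes "cancels a y" "freely_reduced z" shows "push a (push y z) = z"
proof (cases z)
  case Nil then show ?thesis using assms by simp
next
  case (Cons z0 zs)
  show ?thesis
  proof (cases "cancels y z0")
    case True
    then have az: "a = z0" using cancels_eq assms(1) by blast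
    show ?thesis
    proof (cases zs)
      case Nil then show ?thesis using Cons True az by simp
    next
      case (Cons z1 zr)
      then show ?thesis using \<open>z = z0 # zs\<close> True az assms(2) by auto
    qed
  next
    case False then show ?thesis using Cons assms by simp
  qed
qed

lemma push_foldr:
  assumes "freely_reduced U" "freely_reduced w"
  shows "foldr push (push a U) w = push a (foldr push U w)"
proof (cases U)
  case Nil then show ?thesis by simp
next
  case (Cons y ys)
  show ?thesis
  proof (cases "cancels a y")
    case True
    have "freely_reduced (foldr push ys w)" using assms fr_foldr by blast
    then show ?thesis using Cons True push_cancel by simp
  next
    case False then show ?thesis using Cons by simp
  qed
qed

lemma assoc_foldr:
  assumes "freely_reduced v" "freely_reduced w"
  shows "foldr push (foldr push u v) w = foldr push u (foldr push v w)"
  using assms by (induction u) (auto simp: push_foldr fr_foldr)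

lemma foldr_nil: "freely_reduced u \<Longrightarrow> foldr push u [] = u"
proof (induction u)
  case Nil then show ?case by simp
next
  case (Cons a u)
  then have "foldr push u [] = u" using fr_tl by blast
  then show ?case using Cons.prems by (cases u) auto
qed

definition flipl :: "f2letter \<Rightarrow> f2letter" where "flipl a = (fst a, \<not> snd a)"

lemma left_inv_word: "freely_reduced u \<Longrightarrow> foldr push (rev (map flipl u)) u = []"
proof (induction u)
  case Nil then show ?case by simp
next
  case (Cons a u)
  have "cancels (flipl a) a" by (auto simp: cancels_def flipl_def)
  then have "push (flipl a) (a # u) = u" by simp
  then show ?case using Cons fr_tl by simp
qed

lemma group_F2: "group F2"
proof (rule groupI)
  fix x y assume "x \<in> carrier F2" "y \<in> carrier F2"
  then show "x \<otimes>\<^bsub>F2\<^esub> y \<in> carrier F2" by (auto simp: F2_def fr_foldr)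
next
  show "\<one>\<^bsub>F2\<^esub> \<in> carrier F2" by (simp add: F2_def)
next
  fix x y z assume "x \<in> carrier F2" "y \<in> carrier F2" "z \<in> carrier F2"
  then show "x \<otimes>\<^bsub>F2\<^esub> y \<otimes>\<^bsub>F2\<^esub> z = x \<otimes>\<^bsub>F2\<^esub> (y \<otimes>\<^bsub>F2\<^esub> z)"
    by (simp add: F2_def assoc_foldr)
next
  fix x assume "x \<in> carrier F2" then show "\<one>\<^bsub>F2\<^esub> \<otimes>\<^bsub>F2\<^esub> x = x" by (simp add: F2_def)
next
  fix x assume x: "x \<in> carrier F2"
  let ?y = "foldr push (rev (map flipl x)) []"
  have "?y \<in> carrier F2" by (simp add: F2_def fr_foldr)
  moreover have "?y \<otimes>\<^bsub>F2\<^esub> x = \<one>\<^bsub>F2\<^esub>"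
    using x by (simp add: F2_def assoc_foldr left_inv_word)
  ultimately show "\<exists>y\<in>carrier F2. y \<otimes>\<^bsub>F2\<^esub> x = \<one>\<^bsub>F2\<^esub>" by blast
qed

lemma F2_mult: "x \<otimes>\<^bsub>F2\<^esub> y = foldr push x y" by (simp add: F2_def)
lemma F2_one: "\<one>\<^bsub>F2\<^esub> = []" by (simp add: F2_def)
lemma F2_carrier: "carrier F2 = {w. freely_reduced w}" by (simp add: F2_def)

lemma fr_append: "freely_reduced (a @ b) \<Longrightarrow> freely_reduced a \<and> freely_reduced b"
proof (induction a)
  case Nil then show ?case by simp
next
  case (Cons x a)
  then have "freely_reduced (a @ b)" using fr_tl by (metis append_Cons)
  with Cons show ?case by (cases a) auto
qed

lemma mult_append: "freely_reduced (a @ b) \<Longrightarrow> foldr push a b = a @ b"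
proof (induction a)
  case Nil then show ?case by simp
next
  case (Cons x a)
  then have "freely_reduced (a @ b)" using fr_tl by (metis append_Cons)
  then have IH: "foldr push a b = a @ b" using Cons by blast
  show ?case
  proof (cases "a @ b")
    case Nil then show ?thesis using IH by simp
  next
    case (Cons y ys) then show ?thesis using IH Cons.prems by simp
  qed
qed

lemma push_split:
  assumes "freely_reduced x"
  shows "\<exists>c s m2. x = c @ s \<and> foldr push x m = c @ m2 \<and> length s + length m2 \<le> length m"
  using assms
proof (induction x)
  case Nil then show ?case by force
next
  case (Cons a x)
  then obtain c s m2 where h: "x = c @ s" "foldr push x m = c @ m2" "length s + length m2 \<le> length m"
    using fr_tl by blast
  show ?case
  proof (cases c)
    case (Cons c0 c')
    then have "\<not> cancels a c0" using Cons.prems h(1) by simp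
    then have "foldr push (a # x) m = (a # c) @ m2" using h Cons by simp
    then show ?thesis using h
      by (intro exI[of _ "a # c"] exI[of _ s] exI[of _ m2]) simp
  next
    case Nil
    show ?thesis
    proof (cases m2)
      case Nil2: Nil
      have "foldr push (a # x) m = [a] @ []" using h Nil Nil2 by simp
      moreover have "a # x = [a] @ s" using h Nil by simp
      ultimately show ?thesis using h(3) Nil2
        by (intro exI[of _ "[a]"] exI[of _ s] exI[of _ "[]"]) simp
    next
      case (Cons y ys)
      show ?thesis
      proof (cases "cancels a y")
        case True
        have "foldr push (a # x) m = [] @ ys" using h Nil Cons True by simp
        moreover have "a # x = [] @ (a # s)" using h Nil by simp
        ultimately show ?thesis using h(3) Cons
          by (intro exI[of _ "[]"] exI[of _ "a # s"] exI[of _ ys]) simp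
      next
        case False
        have "foldr push (a # x) m = [a] @ m2" using h Nil Cons False by simp
        moreover have "a # x = [a] @ s" using h Nil by simp
        ultimately show ?thesis using h(3)
          by (intro exI[of _ "[a]"] exI[of _ s] exI[of _ m2]) simp
      qed
    qed
  qed
qed



fun endst :: "'q \<Rightarrow> ('q \<times> 's option \<times> 'q \<times> 'g) list \<Rightarrow> 'q" where
  "endst a [] = a"
| "endst a ((_, _, b, _) # ts) = endst b ts"

lemma gpath_endst: "gpath A a ts b \<Longrightarrow> b = endst a ts"
  by (induction rule: gpath.induct) auto

lemma endst_append: "endst a (xs @ ys) = endst (endst a xs) ys"
  by (induction a xs rule: endst.induct) auto

lemma gpath_append: "gpath A a xs b \<Longrightarrow> gpath A b ys c \<Longrightarrow> gpath A a (xs @ ys) c"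
  by (induction rule: gpath.induct) (auto intro: gpath.step)

lemma gpath_split: "gpath A a (xs @ ys) c \<Longrightarrow> gpath A a xs (endst a xs) \<and> gpath A (endst a xs) ys c"
proof (induction xs arbitrary: a)
  case Nil then show ?case by (auto intro: gpath.nil)
next
  case (Cons t xs)
  obtain q s b m where t: "t = (q, s, b, m)" by (cases t) auto
  from Cons.prems t have tr: "(a, s, b, m) \<in> trans A" and "q = a" and p: "gpath A b (xs @ ys) c"
    by (auto elim: gpath.cases)
  from Cons.IH[OF p] show ?case using tr t \<open>q = a\<close> by (auto intro: gpath.step)
qed

lemma gpath_trans: "gpath A a ts b \<Longrightarrow> set ts \<subseteq> trans A"
  by (induction rule: gpath.induct) auto

lemma gpath_states: "gpath A a ts b \<Longrightarrow> wf_gaut G A \<Longrightarrow> a \<in> states A \<Longrightarrow> b \<in> states A"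
  by (induction rule: gpath.induct) (auto simp: wf_gaut_def)

lemma gpath_rep: "(q, s, q, m) \<in> trans A \<Longrightarrow> gpath A q (replicate n (q, s, q, m)) q"
  by (induction n) (auto intro: gpath.intros)

lemma read_word_append: "read_word (xs @ ys) = read_word xs @ read_word ys"
  by (simp add: read_word_def)

lemma read_word_Cons: "read_word ((q, s, b, m) # ts) = (case s of None \<Rightarrow> [] | Some a \<Rightarrow> [a]) @ read_word ts"
  by (simp add: read_word_def)

lemma read_word_Nil: "read_word [] = []"
  by (simp add: read_word_def)

lemma length_read_word_take_Suc:
  "length (read_word (take r ts)) \<le> length (read_word (take (Suc r) ts)) \<and>
   length (read_word (take (Suc r) ts)) \<le> Suc (length (read_word (take r ts)))"
proof (cases "r < length ts")
  case True
  then have "take (Suc r) ts = take r ts @ [ts ! r]" by (simp add: take_Suc_conv_app_nth)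
  moreover obtain q s b m where "ts ! r = (q, s, b, m)" by (cases "ts ! r") auto
  ultimately show ?thesis by (cases s) (auto simp: read_word_append read_word_Cons read_word_Nil)
next
  case False then show ?thesis by simp
qed

definition regf :: "('g, 'x) monoid_scheme \<Rightarrow> 'g \<Rightarrow> ('q \<times> 's option \<times> 'q \<times> 'g) list \<Rightarrow> 'g" where
  "regf G a ts = foldl (\<lambda>x t. x \<otimes>\<^bsub>G\<^esub> snd (snd (snd t))) a ts"

lemma register_alt: "register G ts = regf G \<one>\<^bsub>G\<^esub> ts"
  unfolding register_def regf_def by (rule foldl_cong) (auto split: prod.split)

lemma regf_Nil [simp]: "regf G a [] = a" by (simp add: regf_def)
lemma regf_Cons [simp]: "regf G a ((q, s, b, m) # ts) = regf G (a \<otimes>\<^bsub>G\<^esub> m) ts" by (simp add: regf_def)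
lemma regf_append: "regf G a (xs @ ys) = regf G (regf G a xs) ys" by (simp add: regf_def)

lemma reg_carrier:
  assumes "monoid G" "\<forall>t\<in>set ts. snd (snd (snd t)) \<in> carrier G" "a \<in> carrier G"
  shows "regf G a ts \<in> carrier G"
  using assms(2,3)
proof (induction ts arbitrary: a)
  case Nil then show ?case by simp
next
  case (Cons t ts)
  obtain q s b m where t: "t = (q, s, b, m)" by (cases t) auto
  have "a \<otimes>\<^bsub>G\<^esub> m \<in> carrier G" using Cons.prems t monoid.m_closed[OF assms(1)] by simp
  then have "regf G (a \<otimes>\<^bsub>G\<^esub> m) ts \<in> carrier G" using Cons.IH Cons.prems by simp
  then show ?case using t by simp
qed

lemma foldl_reg:
  assumes "monoid G" "\<forall>t\<in>set ts. snd (snd (snd t)) \<in> carrier G" "a \<in> carrier G"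
  shows "regf G a ts = a \<otimes>\<^bsub>G\<^esub> register G ts"
  using assms(2,3)
proof (induction ts arbitrary: a)
  case Nil then show ?case using assms(1) by (simp add: register_alt monoid.r_one)
next
  case (Cons t ts)
  obtain q s b m where t: "t = (q, s, b, m)" by (cases t) auto
  have m: "m \<in> carrier G" using Cons.prems t by simp
  have c: "regf G \<one>\<^bsub>G\<^esub> ts \<in> carrier G"
    using reg_carrier[OF assms(1), of ts "\<one>\<^bsub>G\<^esub>"] Cons.prems monoid.one_closed[OF assms(1)] by simp
  have "regf G a (t # ts) = (a \<otimes>\<^bsub>G\<^esub> m) \<otimes>\<^bsub>G\<^esub> register G ts"
    using Cons t m monoid.m_closed[OF assms(1)] by simp
  moreover have "register G (t # ts) = m \<otimes>\<^bsub>G\<^esub> register G ts"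
    using Cons t m monoid.l_one[OF assms(1)] by (simp add: register_alt)
  ultimately show ?case using monoid.m_assoc[OF assms(1)] m c Cons.prems by (simp add: register_alt)
qed

lemma register_carrier:
  assumes "monoid G" "\<forall>t\<in>set ts. snd (snd (snd t)) \<in> carrier G"
  shows "register G ts \<in> carrier G"
  unfolding register_alt using reg_carrier[OF assms] monoid.one_closed[OF assms(1)] by simp

lemma register_append:
  assumes "monoid G" "\<forall>t\<in>set (xs @ ys). snd (snd (snd t)) \<in> carrier G"
  shows "register G (xs @ ys) = register G xs \<otimes>\<^bsub>G\<^esub> register G ys"
proof -
  have "register G (xs @ ys) = regf G (register G xs) ys"
    by (simp add: register_alt regf_append)
  also have "\<dots> = register G xs \<otimes>\<^bsub>G\<^esub> register G ys"
    using foldl_reg[OF assms(1), of ys "register G xs"] register_carrier[OF assms(1), of xs] assms(2) by simp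
  finally show ?thesis .
qed

lemma register_Nil: "register G [] = \<one>\<^bsub>G\<^esub>" by (simp add: register_alt)

lemma register_single:
  assumes "monoid G" "m \<in> carrier G" shows "register G [(q, s, b, m)] = m"
  using assms by (simp add: register_alt monoid.l_one)

lemma wf_trans_carrier: "wf_gaut G A \<Longrightarrow> gpath A a ts b \<Longrightarrow> \<forall>t\<in>set ts. snd (snd (snd t)) \<in> carrier G"
  using gpath_trans by (fastforce simp: wf_gaut_def)



definition rooted :: "nat \<Rightarrow> (nat \<Rightarrow> 'a list) \<Rightarrow> nat \<Rightarrow> nat \<Rightarrow> nat \<Rightarrow> 'a list \<Rightarrow> bool" where
  "rooted T x K s t P \<longleftrightarrow> s \<le> t \<and> t \<le> T \<and> (\<forall>r. s \<le> r \<and> r \<le> t \<longrightarrow> take (length P) (x r) = P)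
     \<and> length (x s) \<le> length P + K \<and> length (x t) \<le> length P + K"

definition prof :: "(nat \<Rightarrow> 'q) \<Rightarrow> (nat \<Rightarrow> 'a list) \<Rightarrow> nat \<Rightarrow> nat \<Rightarrow> 'a list \<Rightarrow> 'q \<times> 'a list \<times> 'q \<times> 'a list" where
  "prof q x s t P = (q s, drop (length P) (x s), q t, drop (length P) (x t))"

definition Wd :: "nat \<Rightarrow> 'a list set" where "Wd K = {w. length w \<le> K}"

fun Gb :: "nat \<Rightarrow> nat \<Rightarrow> nat" where
  "Gb N 0 = 0"
| "Gb N (Suc m) = N * (1 + Gb N m)"

locale cmp =
  fixes T :: nat and q :: "nat \<Rightarrow> 'q" and x :: "nat \<Rightarrow> 'a::finite list" and rd :: "nat \<Rightarrow> nat"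
    and K :: nat and Qs :: "'q set"
  assumes finQ: "finite Qs"
    and qQ: "\<And>r. r \<le> T \<Longrightarrow> q r \<in> Qs"
    and stepx: "\<And>r. r < T \<Longrightarrow> \<exists>c s1 s2. x r = c @ s1 \<and> x (Suc r) = c @ s2 \<and> length s1 \<le> K \<and> length s2 \<le> K"
    and rdmono: "\<And>r. r < T \<Longrightarrow> rd r \<le> rd (Suc r)"
    and rdstep: "\<And>r. r < T \<Longrightarrow> rd (Suc r) \<le> Suc (rd r)"
    and NQ1: "\<And>i j. i < j \<Longrightarrow> j \<le> T \<Longrightarrow> q i = q j \<Longrightarrow> x i \<noteq> x j"
    and NQ2: "\<And>s t P s' t' P'. rooted T x K s t P \<Longrightarrow> rooted T x K s' t' P' \<Longrightarrow> s \<le> s' \<Longrightarrow> t' \<le> t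
                \<Longrightarrow> P \<noteq> P' \<Longrightarrow> prof q x s t P \<noteq> prof q x s' t' P'"
begin

lemma finW: "finite (Wd K :: 'a list set)"
proof -
  have "(Wd K :: 'a list set) = {xs. set xs \<subseteq> UNIV \<and> length xs \<le> K}" by (auto simp: Wd_def)
  then show ?thesis using finite_lists_length_le[of "UNIV :: 'a set" K] by simp
qed

lemma finProf: "finite (Qs \<times> (Wd K :: 'a list set) \<times> Qs \<times> (Wd K :: 'a list set))" using finW finQ by simp

lemma take_step:
  assumes "r < T" "n + K \<le> length (x r) \<or> n + K \<le> length (x (Suc r))"
  shows "take n (x r) = take n (x (Suc r)) \<and> n \<le> length (x r) \<and> n \<le> length (x (Suc r))"
proof -
  obtain c s1 s2 where h: "x r = c @ s1" "x (Suc r) = c @ s2" "length s1 \<le> K" "length s2 \<le> K"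
    using stepx[OF assms(1)] by blast
  have "n \<le> length c" using assms(2) h by auto
  then show ?thesis using h by simp
qed

lemma rd_mono: "s \<le> r \<Longrightarrow> r \<le> T \<Longrightarrow> rd s \<le> rd r"
proof (induction r)
  case 0 then show ?case by simp
next
  case (Suc r)
  show ?case
  proof (cases "s = Suc r")
    case True then show ?thesis by simp
  next
    case False
    then have "rd s \<le> rd r" using Suc by simp
    then show ?thesis using rdmono[of r] Suc.prems by simp
  qed
qed

lemma seg_bound:
  "rooted T x K s t P \<Longrightarrow>
   (\<forall>s' t' P'. rooted T x K s' t' P' \<and> s \<le> s' \<and> t' \<le> t \<and> take (length P) P' = P \<longrightarrow> prof q x s' t' P' \<notin> S)
   \<Longrightarrow> card ((Qs \<times> (Wd K :: 'a list set) \<times> Qs \<times> (Wd K :: 'a list set)) - S) \<le> m \<Longrightarrow> rd t - rd s \<le> Gb (card (Qs \<times> (Wd K :: 'a list set))) m"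
proof (induction m arbitrary: s t P S)
  case 0
  have "prof q x s t P \<in> (Qs \<times> (Wd K :: 'a list set) \<times> Qs \<times> (Wd K :: 'a list set))" using 0(1) qQ
    by (auto simp: rooted_def prof_def Wd_def)
  moreover have "prof q x s t P \<notin> S" using 0(2) 0(1) by simp
  ultimately have "(Qs \<times> (Wd K :: 'a list set) \<times> Qs \<times> (Wd K :: 'a list set)) - S \<noteq> {}" by (metis Diff_iff empty_iff)
  then have "card ((Qs \<times> (Wd K :: 'a list set) \<times> Qs \<times> (Wd K :: 'a list set)) - S) > 0" using finProf by (simp add: card_gt_0_iff)
  then show ?case using 0 by simp
next
  case (Suc m)
  note R = Suc.prems(1)
  have sT: "s \<le> t" "t \<le> T" using R by (auto simp: rooted_def)
  have pre: "\<And>r. s \<le> r \<Longrightarrow> r \<le> t \<Longrightarrow> take (length P) (x r) = P" using R by (auto simp: rooted_def)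
  define \<pi> where "\<pi> = prof q x s t P"
  have piP: "\<pi> \<in> (Qs \<times> (Wd K :: 'a list set) \<times> Qs \<times> (Wd K :: 'a list set))" using R qQ
    by (auto simp: rooted_def prof_def Wd_def \<pi>_def)
  have piS: "\<pi> \<notin> S" using Suc.prems(2) Suc.prems(1) by (simp add: \<pi>_def)
  define Lo where "Lo = {r. s \<le> r \<and> r \<le> t \<and> length (x r) \<le> length P + K}"
  have finLo: "finite Lo" by (rule finite_subset[of _ "{s..t}"]) (auto simp: Lo_def)
  have sLo: "s \<in> Lo" and tLo: "t \<in> Lo" using R unfolding Lo_def rooted_def by simp_all
  have cardLo: "card Lo \<le> card (Qs \<times> (Wd K :: 'a list set))"
  proof -
    define f where "f r = (q r, drop (length P) (x r))" for r
    have inj: "inj_on f Lo"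
    proof (rule inj_onI)
      fix r1 r2 assume a: "r1 \<in> Lo" "r2 \<in> Lo" "f r1 = f r2"
      have "take (length P) (x r1) = P" using pre[of r1] a(1) by (simp add: Lo_def)
      then have x1: "x r1 = P @ drop (length P) (x r1)" by (metis append_take_drop_id)
      have "take (length P) (x r2) = P" using pre[of r2] a(2) by (simp add: Lo_def)
      then have x2: "x r2 = P @ drop (length P) (x r2)" by (metis append_take_drop_id)
      have "x r1 = x r2" "q r1 = q r2" using a(3) x1 x2 by (auto simp: f_def)
      moreover have "r1 \<le> T" "r2 \<le> T" using a sT by (auto simp: Lo_def)
      ultimately show "r1 = r2" using NQ1[of r1 r2] NQ1[of r2 r1] by (metis linorder_neqE_nat)
    qed
    have "f ` Lo \<subseteq> Qs \<times> (Wd K :: 'a list set)" using qQ sT by (auto simp: f_def Lo_def Wd_def)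
    then have "card (f ` Lo) \<le> card (Qs \<times> (Wd K :: 'a list set))" using finQ finW by (intro card_mono) auto
    then show ?thesis using card_image[OF inj] by simp
  qed
  have child: "rd r - rd r0 \<le> Gb (card (Qs \<times> (Wd K :: 'a list set))) m"
    if r0L: "r0 \<in> Lo" and rL: "r \<in> Lo" and lt: "Suc r0 < r" and gap: "\<forall>r'. r0 < r' \<and> r' < r \<longrightarrow> r' \<notin> Lo"
    for r0 r
  proof -
    define n where "n = Suc (length P)"
    define P' where "P' = take n (x (Suc r0))"
    have r0s: "s \<le> r0" "r \<le> t" using r0L rL by (auto simp: Lo_def)
    have high: "n + K \<le> length (x r')" if "r0 < r'" "r' < r" for r'
      using gap that r0s by (auto simp: Lo_def n_def)
    have h1: "take n (x (Suc r0 + d)) = P' \<and> n \<le> length (x (Suc r0 + d))" if "Suc r0 + d \<le> r" for d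
      using that
    proof (induction d)
      case 0 then show ?case using high[of "Suc r0"] lt by (simp add: P'_def)
    next
      case (Suc d)
      have hi: "n + K \<le> length (x (Suc r0 + d))" using high[of "Suc r0 + d"] Suc.prems by simp
      have "Suc r0 + d < T" using Suc.prems r0s sT by simp
      have IH: "take n (x (Suc r0 + d)) = P'" using Suc.IH Suc.prems by simp
      have "take n (x (Suc r0 + d)) = take n (x (Suc (Suc r0 + d))) \<and> n \<le> length (x (Suc (Suc r0 + d)))"
        using take_step[OF \<open>Suc r0 + d < T\<close>] hi by blast
      then show ?case using IH by (metis add_Suc_right)
    qed
    have h0: "take n (x r0) = P'"
    proof -
      have "r0 < T" using lt r0s sT by simp
      moreover have "n + K \<le> length (x (Suc r0))" using high[of "Suc r0"] lt by simp
      ultimately have "take n (x r0) = take n (x (Suc r0))" using take_step by blast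
      then show ?thesis by (simp add: P'_def)
    qed
    have allpre: "take n (x r') = P'" if "r0 \<le> r'" "r' \<le> r" for r'
    proof (cases "r' = r0")
      case True then show ?thesis using h0 by simp
    next
      case False
      then have e: "r' = Suc r0 + (r' - Suc r0)" using that by simp
      then have "Suc r0 + (r' - Suc r0) \<le> r" using that by simp
      then have "take n (x (Suc r0 + (r' - Suc r0))) = P'" using h1 by blast
      then show ?thesis using e by simp
    qed
    have lenP': "length P' = n" using h1[of 0] lt by (simp add: P'_def)
    have rootedc: "rooted T x K r0 r P'"
      unfolding rooted_def using allpre lenP' lt r0L rL sT r0s by (auto simp: Lo_def n_def)
    have takeP: "take (length P) P' = P"
      using pre[of "Suc r0"] r0s lt by (simp add: P'_def n_def)
    have hyp: "\<forall>s' t' P''. rooted T x K s' t' P'' \<and> r0 \<le> s' \<and> t' \<le> r \<and> take (length P') P'' = P'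
                 \<longrightarrow> prof q x s' t' P'' \<notin> insert \<pi> S"
    proof (intro allI impI)
      fix s' t' P'' assume a: "rooted T x K s' t' P'' \<and> r0 \<le> s' \<and> t' \<le> r \<and> take (length P') P'' = P'"
      have lenP'': "n \<le> length P''" using a lenP' by (metis length_take min.absorb_iff1 min.commute)
      have "take (length P) P'' = P"
        using a takeP lenP' n_def by (metis Suc_n_not_le_n nat_le_linear take_take min.absorb1)
      then have "prof q x s' t' P'' \<notin> S" using Suc.prems(2) a r0s by auto
      moreover have "P \<noteq> P''" using lenP'' n_def by auto
      then have "\<pi> \<noteq> prof q x s' t' P''"
        using NQ2[OF R] a r0s unfolding \<pi>_def by auto
      ultimately show "prof q x s' t' P'' \<notin> insert \<pi> S" by auto
    qed
    have "card ((Qs \<times> (Wd K :: 'a list set) \<times> Qs \<times> (Wd K :: 'a list set)) - insert \<pi> S) \<le> m"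
    proof -
      have "(Qs \<times> (Wd K :: 'a list set) \<times> Qs \<times> (Wd K :: 'a list set)) - insert \<pi> S = ((Qs \<times> (Wd K :: 'a list set) \<times> Qs \<times> (Wd K :: 'a list set)) - S) - {\<pi>}" by auto
      then have "card ((Qs \<times> (Wd K :: 'a list set) \<times> Qs \<times> (Wd K :: 'a list set)) - insert \<pi> S) = card ((Qs \<times> (Wd K :: 'a list set) \<times> Qs \<times> (Wd K :: 'a list set)) - S) - 1" using piP piS finProf by simp
      then show ?thesis using Suc.prems(3) by simp
    qed
    from Suc.IH[OF rootedc hyp this] show ?thesis .
  qed
  have inner: "rd r - rd s \<le> card {r' \<in> Lo. r' < r} * (1 + Gb (card (Qs \<times> (Wd K :: 'a list set))) m)" if "r \<in> Lo" for r
    using that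
  proof (induction r rule: less_induct)
    case (less r)
    show ?case
    proof (cases "r = s")
      case True then show ?thesis by simp
    next
      case False
      define B where "B = {r' \<in> Lo. r' < r}"
      have rs: "s < r" using less.prems False by (auto simp: Lo_def)
      have finB: "finite B" using finLo by (simp add: B_def)
      have sB: "s \<in> B" using sLo rs by (simp add: B_def)
      define r0 where "r0 = Max B"
      have r0B: "r0 \<in> B" unfolding r0_def using finB sB by (intro Max_in) auto
      have r0max: "\<And>r'. r' \<in> B \<Longrightarrow> r' \<le> r0" using finB by (simp add: r0_def)
      have r0L: "r0 \<in> Lo" and r0r: "r0 < r" using r0B by (auto simp: B_def)
      have gap: "\<forall>r'. r0 < r' \<and> r' < r \<longrightarrow> r' \<notin> Lo" 
      proof (intro allI impI)
        fix r' assume a: "r0 < r' \<and> r' < r"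
        show "r' \<notin> Lo"
        proof
          assume "r' \<in> Lo"
          then have "r' \<in> B" using a by (simp add: B_def)
          then have "r' \<le> r0" by (rule r0max)
          with a show False by simp
        qed
      qed
      have IH: "rd r0 - rd s \<le> card {r' \<in> Lo. r' < r0} * (1 + Gb (card (Qs \<times> (Wd K :: 'a list set))) m)" using less.IH r0r r0L by blast
      have Beq: "B = insert r0 {r' \<in> Lo. r' < r0}"
      proof
        show "B \<subseteq> insert r0 {r' \<in> Lo. r' < r0}"
        proof
          fix r' assume rB: "r' \<in> B"
          then have "r' \<le> r0" by (rule r0max)
          moreover from rB have "r' \<in> Lo" by (simp add: B_def)
          ultimately show "r' \<in> insert r0 {r' \<in> Lo. r' < r0}" by auto
        qed
        show "insert r0 {r' \<in> Lo. r' < r0} \<subseteq> B" using r0B r0r by (auto simp: B_def)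
      qed
      have cB: "card B = Suc (card {r' \<in> Lo. r' < r0})" using Beq finLo by simp
      have rT: "r \<le> T" using less.prems sT by (simp add: Lo_def)
      have step: "rd r - rd r0 \<le> 1 + Gb (card (Qs \<times> (Wd K :: 'a list set))) m"
      proof (cases "r = Suc r0")
        case True then show ?thesis using rdstep[of r0] rT by simp
      next
        case False
        then have "Suc r0 < r" using r0r by simp
        from child[OF r0L less.prems this gap] show ?thesis by simp
      qed
      have m1: "rd s \<le> rd r0" "rd r0 \<le> rd r" using rd_mono r0L rT r0r sLo by (auto simp: Lo_def)
      have "rd r - rd s = (rd r - rd r0) + (rd r0 - rd s)" using m1 by simp
      also have "\<dots> \<le> (1 + Gb (card (Qs \<times> (Wd K :: 'a list set))) m) + card {r' \<in> Lo. r' < r0} * (1 + Gb (card (Qs \<times> (Wd K :: 'a list set))) m)" using step IH by simp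
      also have "\<dots> = card B * (1 + Gb (card (Qs \<times> (Wd K :: 'a list set))) m)" using cB by simp
      finally show ?thesis by (simp add: B_def)
    qed
  qed
  have "card {r' \<in> Lo. r' < t} \<le> card Lo" using finLo by (intro card_mono) auto
  then have "card {r' \<in> Lo. r' < t} * (1 + Gb (card (Qs \<times> (Wd K :: 'a list set))) m) \<le> card (Qs \<times> (Wd K :: 'a list set)) * (1 + Gb (card (Qs \<times> (Wd K :: 'a list set))) m)" using cardLo by (intro mult_right_mono) simp_all
  then show ?case using inner[OF tLo] by simp
qed

lemma total_bound:
  assumes "x 0 = []" "x T = []"
  shows "rd T - rd 0 \<le> Gb (card (Qs \<times> (Wd K :: 'a list set))) (card (Qs \<times> (Wd K :: 'a list set) \<times> Qs \<times> (Wd K :: 'a list set)))"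
proof -
  have "rooted T x K 0 T []" using assms by (simp add: rooted_def)
  then show ?thesis by (rule seg_bound) auto
qed

end



definition L3 :: "nat list set" where
  "L3 = {replicate n 0 @ replicate n 1 @ replicate n 2 | n. True}"

lemma count_rep: "count_list (replicate n y) e = (if y = e then n else 0)"
  by (induction n) auto

lemma L3_sorted: "w \<in> L3 \<Longrightarrow> sorted w"
  by (auto simp: L3_def sorted_append)

lemma L3_set: "w \<in> L3 \<Longrightarrow> set w \<subseteq> {0, 1, 2}"
  by (auto simp: L3_def)

lemma L3_count: "w \<in> L3 \<Longrightarrow> \<exists>n. \<forall>e\<in>{0,1,2}. count_list w e = n"
  by (auto simp: L3_def count_rep)

lemma sorted_uu: "sorted (u @ u) \<Longrightarrow> \<exists>c. set u \<subseteq> {c}"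
proof (cases u)
  case Nil then show ?thesis by simp
next
  case (Cons a u')
  assume s: "sorted (u @ u)"
  have "\<forall>y\<in>set u. y = a"
  proof
    fix y assume y: "y \<in> set u"
    have "a \<le> y" using s y Cons by (auto simp: sorted_append)
    moreover have "y \<le> a" using s y Cons by (auto simp: sorted_append)
    ultimately show "y = a" by simp
  qed
  then show ?thesis by auto
qed

lemma pump_not_L3:
  assumes w: "a @ u @ b @ v @ c \<in> L3" and ne: "u @ v \<noteq> []"
  shows "a @ u @ u @ b @ v @ v @ c \<notin> L3"
proof
  assume w': "a @ u @ u @ b @ v @ v @ c \<in> L3"
  have "sorted (u @ u)" using L3_sorted[OF w'] by (simp add: sorted_append)
  then obtain cu where cu: "set u \<subseteq> {cu}" using sorted_uu by blast
  have "sorted (v @ v)" using L3_sorted[OF w'] by (simp add: sorted_append)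
  then obtain cv where cv: "set v \<subseteq> {cv}" using sorted_uu by blast
  obtain n where n: "\<forall>e\<in>{0,1,2}. count_list (a @ u @ b @ v @ c) e = n" using L3_count[OF w] by blast
  obtain n' where n': "\<forall>e\<in>{0,1,2}. count_list (a @ u @ u @ b @ v @ v @ c) e = n'" using L3_count[OF w'] by blast
  have ceq: "count_list (a @ u @ u @ b @ v @ v @ c) e = count_list (a @ u @ b @ v @ c) e + count_list u e + count_list v e" for e
    by simp
  obtain e0 where e0: "e0 \<in> {0::nat,1,2}" "e0 \<noteq> cu" "e0 \<noteq> cv"
  proof -
    have "\<exists>e0\<in>{0::nat,1,2}. e0 \<noteq> cu \<and> e0 \<noteq> cv" by (cases "cu = 0"; cases "cv = 0"; cases "cu = 1"; cases "cv = 1") auto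
    then show ?thesis using that by blast
  qed
  have z: "count_list u e0 = 0" "count_list v e0 = 0" using cu cv e0 by (auto simp: count_list_0_iff)
  have c1: "count_list (a @ u @ b @ v @ c) e0 = n" using n e0(1) by blast
  have c2: "count_list (a @ u @ u @ b @ v @ v @ c) e0 = n'" using n' e0(1) by blast
  have nn: "n' = n" using ceq[of e0] c1 c2 z by linarith
  obtain e1 where e1: "e1 \<in> set (u @ v)" using ne by (cases "u @ v") auto
  have "set (u @ v) \<subseteq> {0,1,2}" using L3_set[OF w] by auto
  then have e1s: "e1 \<in> {0,1,2}" using e1 by auto
  have "count_list (u @ v) e1 > 0" using e1 by (metis count_list_0_iff gr0I)
  then have "count_list u e1 + count_list v e1 > 0" by simp
  moreover have "count_list (a @ u @ b @ v @ c) e1 = n" using n e1s by blast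
  moreover have "count_list (a @ u @ u @ b @ v @ v @ c) e1 = n'" using n' e1s by blast
  ultimately show False using ceq[of e1] nn by linarith
qed



definition Cm :: "('q \<times> 's option \<times> 'q \<times> f2letter list) list \<Rightarrow> bool" where
  "Cm ts \<longleftrightarrow> (\<forall>t\<in>set ts. snd (snd (snd t)) \<in> carrier F2)"

lemma Cm_append [simp]: "Cm (xs @ ys) \<longleftrightarrow> Cm xs \<and> Cm ys"
  by (auto simp: Cm_def)

lemma Cm_take: "Cm ts \<Longrightarrow> Cm (take n ts)"
  by (auto simp: Cm_def dest: in_set_takeD)

lemma Cm_drop: "Cm ts \<Longrightarrow> Cm (drop n ts)"
  by (auto simp: Cm_def dest: in_set_dropD)

lemma regF2_append: "Cm xs \<Longrightarrow> Cm ys \<Longrightarrow> register F2 (xs @ ys) = register F2 xs \<otimes>\<^bsub>F2\<^esub> register F2 ys"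
  using register_append[of F2 xs ys] group_F2 unfolding Cm_def by (metis Un_iff group.is_monoid set_append)

lemma regF2_carrier: "Cm xs \<Longrightarrow> register F2 xs \<in> carrier F2"
  using register_carrier[of F2 xs] group_F2 by (simp add: Cm_def group.is_monoid)

lemma (in group) cancel_left_aux: "a \<in> carrier G \<Longrightarrow> b \<in> carrier G \<Longrightarrow> inv a \<otimes> (a \<otimes> b) = b"
  by (simp add: m_assoc[symmetric])

lemma no_quad:
  fixes A :: "(nat, nat, f2letter list) gautomaton"
  assumes wf: "wf_gaut F2 A" and lang: "gaut_lang F2 A = L3"
    and acc: "accepting_comp F2 A w ts"
    and minimal: "\<forall>ts'. accepting_comp F2 A w ts' \<longrightarrow> length ts \<le> length ts'"
    and ord: "i \<le> j" "j \<le> k" "k \<le> l" "l \<le> length ts" "i < j \<or> k < l"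
    and st1: "endst (init A) (take i ts) = endst (init A) (take j ts)"
    and st2: "endst (init A) (take k ts) = endst (init A) (take l ts)"
    and cond: "inv\<^bsub>F2\<^esub> (register F2 (take i ts)) \<otimes>\<^bsub>F2\<^esub> register F2 (take l ts)
             = inv\<^bsub>F2\<^esub> (register F2 (take j ts)) \<otimes>\<^bsub>F2\<^esub> register F2 (take k ts)"
  shows False
proof -
  interpret F2: group F2 by (rule group_F2)
  define a0 where "a0 = init A"
  obtain qf where path: "gpath A a0 ts qf" and qfa: "qf \<in> accepting A" and rw: "read_word ts = w"
    and reg1: "register F2 ts = \<one>\<^bsub>F2\<^esub>"
    using acc by (auto simp: accepting_comp_def a0_def)
  have Cts: "Cm ts" using wf_trans_carrier[OF wf path] by (simp add: Cm_def)
  define t1 where "t1 = take i ts"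
  define t2 where "t2 = take (j - i) (drop i ts)"
  define t3 where "t3 = take (k - j) (drop j ts)"
  define t4 where "t4 = take (l - k) (drop k ts)"
  define t5 where "t5 = drop l ts"
  have tj: "take j ts = t1 @ t2" using ord take_add[of i "j - i" ts] by (simp add: t1_def t2_def)
  have tk: "take k ts = t1 @ t2 @ t3" using ord take_add[of j "k - j" ts] tj by (simp add: t3_def)
  have tl: "take l ts = t1 @ t2 @ t3 @ t4" using ord take_add[of k "l - k" ts] tk by (simp add: t4_def)
  have tsd: "ts = t1 @ t2 @ t3 @ t4 @ t5" using tl by (metis append_assoc append_take_drop_id t5_def)
  have C1: "Cm t1" "Cm t2" "Cm t3" "Cm t4" "Cm t5" using Cts tsd by (metis Cm_append)+
  define S1 where "S1 = endst a0 t1"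
  define S2 where "S2 = endst a0 (t1 @ t2 @ t3)"
  have S1j: "endst S1 t2 = S1" using st1 tj by (simp add: S1_def t1_def a0_def endst_append)
  have S2l: "endst S2 t4 = S2" using st2 tk tl by (simp add: S2_def a0_def endst_append)
  have S2k: "endst S1 t3 = S2" using S1j by (simp add: S1_def S2_def endst_append)
  have p1: "gpath A a0 t1 S1" and r1: "gpath A S1 (t2 @ t3 @ t4 @ t5) qf"
    using gpath_split[of A a0 t1 "t2 @ t3 @ t4 @ t5" qf] path tsd by (auto simp: S1_def)
  have p2: "gpath A S1 t2 S1" and r2: "gpath A S1 (t3 @ t4 @ t5) qf"
    using gpath_split[OF r1] S1j by auto
  have p3: "gpath A S1 t3 S2" and r3: "gpath A S2 (t4 @ t5) qf"
    using gpath_split[OF r2] S2k by auto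
  have p4: "gpath A S2 t4 S2" and p5: "gpath A S2 t5 qf"
    using gpath_split[OF r3] S2l by auto
  define R1 where "R1 = register F2 t1"
  define g where "g = register F2 t2"
  define h where "h = register F2 t3"
  define g' where "g' = register F2 t4"
  define r5 where "r5 = register F2 t5"
  have cR: "R1 \<in> carrier F2" "g \<in> carrier F2" "h \<in> carrier F2" "g' \<in> carrier F2" "r5 \<in> carrier F2"
    using C1 regF2_carrier by (auto simp: R1_def g_def h_def g'_def r5_def)
  have tot: "R1 \<otimes>\<^bsub>F2\<^esub> (g \<otimes>\<^bsub>F2\<^esub> (h \<otimes>\<^bsub>F2\<^esub> (g' \<otimes>\<^bsub>F2\<^esub> r5))) = \<one>\<^bsub>F2\<^esub>"
    using reg1 tsd C1 by (simp add: regF2_append R1_def g_def h_def g'_def r5_def)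
  have Xi: "register F2 (take i ts) = R1" by (simp add: R1_def t1_def)
  have Xj: "register F2 (take j ts) = R1 \<otimes>\<^bsub>F2\<^esub> g" using tj C1 by (simp add: regF2_append R1_def g_def)
  have Xk: "register F2 (take k ts) = R1 \<otimes>\<^bsub>F2\<^esub> (g \<otimes>\<^bsub>F2\<^esub> h)" using tk C1 by (simp add: regF2_append R1_def g_def h_def)
  have Xl: "register F2 (take l ts) = R1 \<otimes>\<^bsub>F2\<^esub> (g \<otimes>\<^bsub>F2\<^esub> (h \<otimes>\<^bsub>F2\<^esub> g'))" using tl C1 by (simp add: regF2_append R1_def g_def h_def g'_def)
  have key: "g \<otimes>\<^bsub>F2\<^esub> (h \<otimes>\<^bsub>F2\<^esub> g') = h"
  proof -
    have "inv\<^bsub>F2\<^esub> R1 \<otimes>\<^bsub>F2\<^esub> (R1 \<otimes>\<^bsub>F2\<^esub> (g \<otimes>\<^bsub>F2\<^esub> (h \<otimes>\<^bsub>F2\<^esub> g'))) = g \<otimes>\<^bsub>F2\<^esub> (h \<otimes>\<^bsub>F2\<^esub> g')"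
      using cR by (simp add: F2.cancel_left_aux)
    moreover have "inv\<^bsub>F2\<^esub> (R1 \<otimes>\<^bsub>F2\<^esub> g) \<otimes>\<^bsub>F2\<^esub> (R1 \<otimes>\<^bsub>F2\<^esub> (g \<otimes>\<^bsub>F2\<^esub> h)) = h"
      using cR F2.cancel_left_aux[of "R1 \<otimes>\<^bsub>F2\<^esub> g" h] by (simp add: F2.m_assoc)
    ultimately show ?thesis using cond Xi Xj Xk Xl by simp
  qed
  have assoc3: "g \<otimes>\<^bsub>F2\<^esub> (h \<otimes>\<^bsub>F2\<^esub> (g' \<otimes>\<^bsub>F2\<^esub> y)) = h \<otimes>\<^bsub>F2\<^esub> y" if "y \<in> carrier F2" for y
  proof -
    have "g \<otimes>\<^bsub>F2\<^esub> (h \<otimes>\<^bsub>F2\<^esub> (g' \<otimes>\<^bsub>F2\<^esub> y)) = (g \<otimes>\<^bsub>F2\<^esub> (h \<otimes>\<^bsub>F2\<^esub> g')) \<otimes>\<^bsub>F2\<^esub> y"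
      using cR that by (simp add: F2.m_assoc)
    then show ?thesis using key by simp
  qed
  show False
  proof (cases "read_word t2 = [] \<and> read_word t4 = []")
    case True
    define ts' where "ts' = t1 @ t3 @ t5"
    have "gpath A a0 ts' qf" unfolding ts'_def using p1 p3 p5 by (blast intro: gpath_append)
    moreover have "read_word ts' = w" using rw tsd True by (simp add: ts'_def read_word_append)
    moreover have "register F2 ts' = \<one>\<^bsub>F2\<^esub>"
    proof -
      have "register F2 ts' = R1 \<otimes>\<^bsub>F2\<^esub> (h \<otimes>\<^bsub>F2\<^esub> r5)" using C1
        by (simp add: ts'_def regF2_append R1_def h_def r5_def)
      also have "\<dots> = R1 \<otimes>\<^bsub>F2\<^esub> (g \<otimes>\<^bsub>F2\<^esub> (h \<otimes>\<^bsub>F2\<^esub> (g' \<otimes>\<^bsub>F2\<^esub> r5)))" using assoc3[of r5] cR by simp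
      finally show ?thesis using tot by simp
    qed
    ultimately have "accepting_comp F2 A w ts'" using qfa by (auto simp: accepting_comp_def a0_def)
    with minimal have "length ts \<le> length ts'" by blast
    moreover have "length t2 = j - i" "length t4 = l - k" using ord by (simp_all add: t2_def t4_def)
    moreover have "length ts = length ts' + length t2 + length t4"
      using arg_cong[OF tsd, of length] by (simp add: ts'_def)
    ultimately show False using ord by linarith
  next
    case False
    define ts' where "ts' = t1 @ t2 @ t2 @ t3 @ t4 @ t4 @ t5"
    have "gpath A a0 ts' qf" unfolding ts'_def using p1 p2 p3 p4 p5 by (blast intro: gpath_append)
    moreover have "register F2 ts' = \<one>\<^bsub>F2\<^esub>"
    proof -
      have "register F2 ts' = R1 \<otimes>\<^bsub>F2\<^esub> (g \<otimes>\<^bsub>F2\<^esub> (g \<otimes>\<^bsub>F2\<^esub> (h \<otimes>\<^bsub>F2\<^esub> (g' \<otimes>\<^bsub>F2\<^esub> (g' \<otimes>\<^bsub>F2\<^esub> r5)))))" using C1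
        by (simp add: ts'_def regF2_append R1_def g_def h_def g'_def r5_def)
      also have "\<dots> = R1 \<otimes>\<^bsub>F2\<^esub> (g \<otimes>\<^bsub>F2\<^esub> (h \<otimes>\<^bsub>F2\<^esub> (g' \<otimes>\<^bsub>F2\<^esub> r5)))" using assoc3[of "g' \<otimes>\<^bsub>F2\<^esub> r5"] cR by simp
      finally show ?thesis using tot by simp
    qed
    ultimately have "accepting_comp F2 A (read_word ts') ts'" using qfa by (auto simp: accepting_comp_def a0_def)
    then have "read_word ts' \<in> L3" using lang by (auto simp: gaut_lang_def)
    moreover have "read_word ts = read_word t1 @ read_word t2 @ read_word t3 @ read_word t4 @ read_word t5"
      using tsd by (metis read_word_append)
    moreover have "read_word ts' = read_word t1 @ read_word t2 @ read_word t2 @ read_word t3 @ read_word t4 @ read_word t4 @ read_word t5"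
      by (simp add: ts'_def read_word_append)
    moreover have "read_word ts \<in> L3" using acc lang rw by (auto simp: gaut_lang_def)
    moreover have "read_word t2 @ read_word t4 \<noteq> []" using False by simp
    ultimately show False using pump_not_L3 by metis
  qed
qed



lemma (in group) inv_mult_cancel_aux:
  "a \<in> carrier G \<Longrightarrow> b \<in> carrier G \<Longrightarrow> c \<in> carrier G \<Longrightarrow> inv (a \<otimes> b) \<otimes> (a \<otimes> c) = inv b \<otimes> c"
  by (simp add: inv_mult_group m_assoc cancel_left_aux)

lemma split_reg:
  "freely_reduced (P @ s) \<Longrightarrow> P @ s = P \<otimes>\<^bsub>F2\<^esub> s \<and> P \<in> carrier F2 \<and> s \<in> carrier F2"
  using fr_append[of P s] mult_append[of P s] by (simp add: F2_mult F2_carrier)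

lemma L3_not_F2:
  fixes A :: "(nat, nat, f2letter list) gautomaton"
  assumes wf: "wf_gaut F2 A" and lang: "gaut_lang F2 A = L3"
  shows False
proof -
  interpret F2: group F2 by (rule group_F2)
  define K where "K = Max (insert 0 ((\<lambda>t. length (snd (snd (snd t)))) ` trans A))"
  have finT: "finite (trans A)" using wf by (simp add: wf_gaut_def)
  have Kge: "length (snd (snd (snd t))) \<le> K" if "t \<in> trans A" for t
    unfolding K_def using finT that by (intro Max_ge) auto
  define Qs where "Qs = states A"
  define Bd where "Bd = Gb (card (Qs \<times> (Wd K :: f2letter list set)))
      (card (Qs \<times> (Wd K :: f2letter list set) \<times> Qs \<times> (Wd K :: f2letter list set)))"
  define n where "n = Suc Bd"
  define w where "w = replicate n (0::nat) @ replicate n 1 @ replicate n 2"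
  have "w \<in> L3" by (auto simp: L3_def w_def)
  then obtain ts0 where "accepting_comp F2 A w ts0" using lang by (auto simp: gaut_lang_def)
  then obtain ts where acc: "accepting_comp F2 A w ts"
      and minimal: "\<forall>ts'. accepting_comp F2 A w ts' \<longrightarrow> length ts \<le> length ts'"
    using ex_has_least_nat[of "accepting_comp F2 A w" ts0 length] by blast
  define a0 where "a0 = init A"
  obtain qf where path: "gpath A a0 ts qf" and rw: "read_word ts = w"
    and reg1: "register F2 ts = \<one>\<^bsub>F2\<^esub>"
    using acc by (auto simp: accepting_comp_def a0_def)
  have Cts: "Cm ts" using wf_trans_carrier[OF wf path] by (simp add: Cm_def)
  define T where "T = length ts"
  define qq where "qq r = endst a0 (take r ts)" for r
  define X where "X r = register F2 (take r ts)" for r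
  define rd where "rd r = length (read_word (take r ts))" for r
  have Xc: "X r \<in> carrier F2" for r unfolding X_def using Cts Cm_take regF2_carrier by blast
  have Xfr: "freely_reduced (X r)" for r using Xc[of r] by (simp add: F2_carrier)
  have cmp: "cmp T qq X rd K Qs"
  proof
    show "finite Qs" using wf by (simp add: wf_gaut_def Qs_def)
  next
    fix r assume "r \<le> T"
    have "gpath A a0 (take r ts) (endst a0 (take r ts))"
      using gpath_split[of A a0 "take r ts" "drop r ts" qf] path by simp
    moreover have "a0 \<in> states A" using wf by (simp add: wf_gaut_def a0_def)
    ultimately show "qq r \<in> Qs" using gpath_states wf by (fastforce simp: qq_def Qs_def)
  next
    fix r assume r: "r < T"
    obtain q s b m where tr: "ts ! r = (q, s, b, m)" by (cases "ts ! r") auto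
    have tsr: "take (Suc r) ts = take r ts @ [(q, s, b, m)]"
      using r tr by (simp add: T_def take_Suc_conv_app_nth)
    have inT: "(q, s, b, m) \<in> trans A" using gpath_trans[OF path] r tr unfolding T_def
      by (metis nth_mem subsetD)
    have mc: "m \<in> carrier F2" using wf inT by (auto simp: wf_gaut_def)
    have mK: "length m \<le> K" using Kge[OF inT] by simp
    have "X (Suc r) = X r \<otimes>\<^bsub>F2\<^esub> m"
      unfolding X_def tsr using Cts Cm_take[OF Cts, of r] mc
      by (simp add: regF2_append register_single[OF F2.is_monoid mc] Cm_def)
    then have "X (Suc r) = foldr push (X r) m" by (simp add: F2_mult)
    then obtain c s1 m2 where "X r = c @ s1" "X (Suc r) = c @ m2" "length s1 + length m2 \<le> length m"
      using push_split[OF Xfr[of r], of m] by auto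
    then show "\<exists>c s1 s2. X r = c @ s1 \<and> X (Suc r) = c @ s2 \<and> length s1 \<le> K \<and> length s2 \<le> K"
      using mK by (intro exI[of _ c] exI[of _ s1] exI[of _ m2]) simp
  next
    fix r assume "r < T"
    show "rd r \<le> rd (Suc r)" using length_read_word_take_Suc[of r ts] by (simp add: rd_def)
  next
    fix r assume "r < T"
    show "rd (Suc r) \<le> Suc (rd r)" using length_read_word_take_Suc[of r ts] by (simp add: rd_def)
  next
    fix i j assume ij: "i < j" "j \<le> T" "qq i = qq j"
    show "X i \<noteq> X j"
    proof
      assume e: "X i = X j"
      show False
        using no_quad[OF wf lang acc minimal, of i j j j] ij e
        by (simp add: T_def qq_def a0_def X_def)
    qed
  next
    fix s t P s' t' P'
    assume R: "rooted T X K s t P" and R': "rooted T X K s' t' P'" and o: "s \<le> s'" "t' \<le> t"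
      and ne: "P \<noteq> P'"
    show "prof qq X s t P \<noteq> prof qq X s' t' P'"
    proof
      assume pe: "prof qq X s t P = prof qq X s' t' P'"
      define \<sigma> where "\<sigma> = drop (length P) (X s)"
      define \<sigma>' where "\<sigma>' = drop (length P) (X t)"
      have pe1: "qq s = qq s'" "qq t = qq t'" "drop (length P') (X s') = \<sigma>" "drop (length P') (X t') = \<sigma>'"
        using pe by (auto simp: prof_def \<sigma>_def \<sigma>'_def)
      have ord: "s \<le> t" "t \<le> T" "s' \<le> t'" using R R' by (auto simp: rooted_def)
      have xs: "X s = P @ \<sigma>" using R ord unfolding rooted_def \<sigma>_def by (metis append_take_drop_id order_refl)
      have xt: "X t = P @ \<sigma>'" using R ord unfolding rooted_def \<sigma>'_def by (metis append_take_drop_id order_refl)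
      have xs': "X s' = P' @ \<sigma>" using R' ord pe1 unfolding rooted_def by (metis append_take_drop_id order_refl)
      have xt': "X t' = P' @ \<sigma>'" using R' ord pe1 unfolding rooted_def by (metis append_take_drop_id order_refl)
      have strict: "s < s' \<or> t' < t"
      proof (rule ccontr)
        assume "\<not> (s < s' \<or> t' < t)"
        then have "s = s'" using o by simp
        then have "P @ \<sigma> = P' @ \<sigma>" using xs xs' by simp
        then show False using ne by simp
      qed
      have d1: "X s = P \<otimes>\<^bsub>F2\<^esub> \<sigma>" "P \<in> carrier F2" "\<sigma> \<in> carrier F2"
        using split_reg[of P \<sigma>] Xfr[of s] xs by auto
      have d2: "X t = P \<otimes>\<^bsub>F2\<^esub> \<sigma>'" "\<sigma>' \<in> carrier F2"
        using split_reg[of P \<sigma>'] Xfr[of t] xt by auto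
      have d3: "X s' = P' \<otimes>\<^bsub>F2\<^esub> \<sigma>" "P' \<in> carrier F2"
        using split_reg[of P' \<sigma>] Xfr[of s'] xs' by auto
      have d4: "X t' = P' \<otimes>\<^bsub>F2\<^esub> \<sigma>'"
        using split_reg[of P' \<sigma>'] Xfr[of t'] xt' by auto
      have cond: "inv\<^bsub>F2\<^esub> (X s) \<otimes>\<^bsub>F2\<^esub> X t = inv\<^bsub>F2\<^esub> (X s') \<otimes>\<^bsub>F2\<^esub> X t'"
        using d1 d2 d3 d4 by (simp add: F2.inv_mult_cancel_aux)
      show False
        using no_quad[OF wf lang acc minimal, of s s' t' t] o ord strict pe1 cond
        by (simp add: T_def qq_def a0_def X_def)
    qed
  qed
  have X0: "X 0 = []" by (simp add: X_def register_Nil F2_one)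
  have XT: "X T = []" using reg1 by (simp add: X_def T_def F2_one)
  have "rd T - rd 0 \<le> Bd"
    using cmp.total_bound[OF cmp X0 XT] by (simp add: Bd_def)
  moreover have "rd T = 3 * n" using rw by (simp add: rd_def T_def w_def)
  moreover have "rd 0 = 0" by (simp add: rd_def read_word_Nil)
  ultimately show False by (simp add: n_def)
qed



definition aP :: f2letter where "aP = (False, True)"
definition aN :: f2letter where "aN = (False, False)"

definition phi :: "f2letter list \<Rightarrow> int" where
  "phi w = sum_list (map (\<lambda>l. if fst l then 0 else if snd l then 1 else -1) w)"

definition phil :: "f2letter \<Rightarrow> int" where "phil l = (if fst l then 0 else if snd l then 1 else -1)"

lemma phi_simps [simp]: "phi [] = 0" "phi (a # w) = phil a + phi w"
  by (simp_all add: phi_def phil_def)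

lemma phi_push: "phi (push a v) = phil a + phi v"
proof (cases v)
  case Nil then show ?thesis by simp
next
  case (Cons y ys)
  show ?thesis
  proof (cases "cancels a y")
    case True
    then have "phil a + phil y = 0" by (cases a; cases y) (auto simp: cancels_def phil_def)
    then show ?thesis using Cons True by simp
  next
    case False then show ?thesis using Cons by simp
  qed
qed

lemma phi_mult: "phi (foldr push u v) = phi u + phi v"
  by (induction u) (auto simp: phi_push)

definition S1 :: "('q \<times> 's option \<times> 'q \<times> f2letter list \<times> f2letter list) list \<Rightarrow> int" where
  "S1 ts = sum_list (map (\<lambda>t. phi (fst (snd (snd (snd t))))) ts)"
definition S2 :: "('q \<times> 's option \<times> 'q \<times> f2letter list \<times> f2letter list) list \<Rightarrow> int" where
  "S2 ts = sum_list (map (\<lambda>t. phi (snd (snd (snd (snd t))))) ts)"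

lemma S_simps [simp]: "S1 [] = 0" "S2 [] = 0"
  "S1 ((q, s, b, m1, m2) # ts) = phi m1 + S1 ts" "S2 ((q, s, b, m1, m2) # ts) = phi m2 + S2 ts"
  by (simp_all add: S1_def S2_def)

lemma regf_phi:
  "phi (fst (regf (F2 \<times>\<times> F2) (a1, a2) ts)) = phi a1 + S1 ts \<and>
   phi (snd (regf (F2 \<times>\<times> F2) (a1, a2) ts)) = phi a2 + S2 ts"
proof (induction ts arbitrary: a1 a2)
  case Nil then show ?case by simp
next
  case (Cons t ts)
  obtain q s b m1 m2 where t: "t = (q, s, b, m1, m2)" by (cases t) auto
  show ?case using Cons[of "a1 \<otimes>\<^bsub>F2\<^esub> m1" "a2 \<otimes>\<^bsub>F2\<^esub> m2"] t by (simp add: F2_mult phi_mult)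
qed

definition tr0 :: "nat \<times> nat option \<times> nat \<times> f2letter list \<times> f2letter list" where "tr0 = (0, Some 0, 0, [aP], [])"
definition e01 :: "nat \<times> nat option \<times> nat \<times> f2letter list \<times> f2letter list" where "e01 = (0, None, 1, [], [])"
definition tr1 :: "nat \<times> nat option \<times> nat \<times> f2letter list \<times> f2letter list" where "tr1 = (1, Some 1, 1, [aN], [aP])"
definition e12 :: "nat \<times> nat option \<times> nat \<times> f2letter list \<times> f2letter list" where "e12 = (1, None, 2, [], [])"
definition tr2 :: "nat \<times> nat option \<times> nat \<times> f2letter list \<times> f2letter list" where "tr2 = (2, Some 2, 2, [], [aN])"

definition A3 :: "(nat, nat, f2letter list \<times> f2letter list) gautomaton" where
  "A3 = \<lparr>states = {0, 1, 2}, alphabet = {0, 1, 2}, init = 0, accepting = {2},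
         trans = {tr0, e01, tr1, e12, tr2}\<rparr>"

lemma A3_wf: "wf_gaut (F2 \<times>\<times> F2) A3"
  by (auto simp: wf_gaut_def A3_def tr0_def e01_def tr1_def e12_def tr2_def F2_carrier)

lemma A3_path:
  "gpath A3 q ts q' \<Longrightarrow> q' = 2 \<Longrightarrow> \<exists>i j k.
     (q = 0 \<and> read_word ts = replicate i 0 @ replicate j 1 @ replicate k 2 \<and> S1 ts = int i - int j \<and> S2 ts = int j - int k)
   \<or> (q = 1 \<and> read_word ts = replicate j 1 @ replicate k 2 \<and> S1 ts = - int j \<and> S2 ts = int j - int k)
   \<or> (q = 2 \<and> read_word ts = replicate k 2 \<and> S1 ts = 0 \<and> S2 ts = - int k)"
proof (induction rule: gpath.induct)
  case (nil q)
  then show ?case by (intro exI[of _ 0]) (simp add: read_word_Nil)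
next
  case (step q s q' m ts q'')
  then obtain i j k where IH:
    "(q' = 0 \<and> read_word ts = replicate i 0 @ replicate j 1 @ replicate k 2 \<and> S1 ts = int i - int j \<and> S2 ts = int j - int k)
   \<or> (q' = 1 \<and> read_word ts = replicate j 1 @ replicate k 2 \<and> S1 ts = - int j \<and> S2 ts = int j - int k)
   \<or> (q' = 2 \<and> read_word ts = replicate k 2 \<and> S1 ts = 0 \<and> S2 ts = - int k)" by blast
  have "(q, s, q', m) \<in> {tr0, e01, tr1, e12, tr2}" using step(1) by (simp add: A3_def)
  then consider "(q, s, q', m) = tr0" | "(q, s, q', m) = e01" | "(q, s, q', m) = tr1"
    | "(q, s, q', m) = e12" | "(q, s, q', m) = tr2" by blast
  then show ?case
  proof cases
    case 1
    then have e: "q = 0" "s = Some 0" "q' = 0" "m = ([aP], [])" by (auto simp: tr0_def)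
    then show ?thesis using IH
      by (intro exI[of _ "Suc i"] exI[of _ j] exI[of _ k]) (auto simp: read_word_Cons aP_def phil_def)
  next
    case 2
    then have e: "q = 0" "s = None" "q' = 1" "m = ([], [])" by (auto simp: e01_def)
    then show ?thesis using IH
      by (intro exI[of _ 0] exI[of _ j] exI[of _ k]) (auto simp: read_word_Cons)
  next
    case 3
    then have e: "q = 1" "s = Some 1" "q' = 1" "m = ([aN], [aP])" by (auto simp: tr1_def)
    then show ?thesis using IH
      by (intro exI[of _ i] exI[of _ "Suc j"] exI[of _ k]) (auto simp: read_word_Cons aP_def aN_def phil_def)
  next
    case 4
    then have e: "q = 1" "s = None" "q' = 2" "m = ([], [])" by (auto simp: e12_def)
    then show ?thesis using IH
      by (intro exI[of _ i] exI[of _ 0] exI[of _ k]) (auto simp: read_word_Cons)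
  next
    case 5
    then have e: "q = 2" "s = Some 2" "q' = 2" "m = ([], [aN])" by (auto simp: tr2_def)
    then show ?thesis using IH
      by (intro exI[of _ i] exI[of _ j] exI[of _ "Suc k"]) (auto simp: read_word_Cons aN_def phil_def)
  qed
qed

lemma A3_lang_sub: "gaut_lang (F2 \<times>\<times> F2) A3 \<subseteq> L3"
proof
  fix w assume "w \<in> gaut_lang (F2 \<times>\<times> F2) A3"
  then obtain ts qf where p: "gpath A3 0 ts qf" and qf: "qf \<in> {2}" and rw: "read_word ts = w"
    and rg: "register (F2 \<times>\<times> F2) ts = ([], [])"
    by (auto simp: gaut_lang_def accepting_comp_def A3_def F2_one)
  have "regf (F2 \<times>\<times> F2) ([], []) ts = ([], [])" using rg by (simp add: register_alt F2_one)
  then have s: "S1 ts = 0" "S2 ts = 0" using regf_phi[of "[]" "[]" ts] by simp_all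
  obtain i j k where "read_word ts = replicate i 0 @ replicate j 1 @ replicate k 2"
      "S1 ts = int i - int j" "S2 ts = int j - int k"
    using A3_path[OF p] qf by auto
  then show "w \<in> L3" using s rw by (auto simp: L3_def)
qed

lemma read_rep: "read_word (replicate n (q, Some a, q, m)) = replicate n a"
  by (induction n) (simp_all add: read_word_Nil read_word_Cons)

lemma fr_repP: "freely_reduced (replicate k aP)"
proof (induction k)
  case 0 then show ?case by simp
next
  case (Suc k) then show ?case by (cases k) (auto simp: aP_def cancels_def)
qed

lemma push_repP: "push aP (replicate k aP) = replicate (Suc k) aP"
  by (cases k) (auto simp: aP_def cancels_def)

lemma rP: "foldr push (replicate k aP) [aP] = replicate (Suc k) aP"
  by (induction k) (auto simp: push_repP aP_def cancels_def)

lemma rN: "foldr push (replicate (Suc k) aP) [aN] = replicate k aP"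
proof (induction k)
  case 0 then show ?case by (simp add: aP_def aN_def cancels_def)
next
  case (Suc k)
  have "foldr push (replicate (Suc (Suc k)) aP) [aN] = push aP (foldr push (replicate (Suc k) aP) [aN])" by simp
  also have "\<dots> = replicate (Suc k) aP" using Suc push_repP by simp
  finally show ?case .
qed

lemma rE: "foldr push (replicate k aP) [] = replicate k aP"
  using foldr_nil[OF fr_repP] .

abbreviation GG where "GG \<equiv> F2 \<times>\<times> F2"

lemma ph1: "regf GG (replicate i aP, []) (replicate n tr0) = (replicate (i + n) aP, [])"
proof (induction n arbitrary: i)
  case 0 then show ?case by simp
next
  case (Suc n)
  have "regf GG (replicate i aP, []) (replicate (Suc n) tr0) = regf GG (replicate (Suc i) aP, []) (replicate n tr0)"
    by (simp del: foldr_replicate add: tr0_def F2_mult rP)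
  then show ?case using Suc[of "Suc i"] by simp
qed

lemma ph2: "regf GG (replicate (d + n) aP, replicate j aP) (replicate n tr1) = (replicate d aP, replicate (j + n) aP)"
proof (induction n arbitrary: j)
  case 0 then show ?case by simp
next
  case (Suc n)
  have "regf GG (replicate (d + Suc n) aP, replicate j aP) (replicate (Suc n) tr1)
      = regf GG (replicate (d + n) aP, replicate (Suc j) aP) (replicate n tr1)"
    using rN[of "d + n"] by (simp del: foldr_replicate add: tr1_def F2_mult rP)
  then show ?case using Suc[of "Suc j"] by simp
qed

lemma ph3: "regf GG ([], replicate (d + n) aP) (replicate n tr2) = ([], replicate d aP)"
proof (induction n)
  case 0 then show ?case by simp
next
  case (Suc n)
  have "regf GG ([], replicate (Suc (d + n)) aP) (replicate (Suc n) tr2)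
      = regf GG ([], replicate (d + n) aP) (replicate n tr2)"
    using rN[of "d + n"] by (simp del: foldr_replicate add: tr2_def F2_mult)
  then show ?case using Suc by simp
qed

definition comp3 :: "nat \<Rightarrow> (nat \<times> nat option \<times> nat \<times> f2letter list \<times> f2letter list) list" where
  "comp3 n = replicate n tr0 @ [e01] @ replicate n tr1 @ [e12] @ replicate n tr2"

lemma comp3_acc: "accepting_comp GG A3 (replicate n 0 @ replicate n 1 @ replicate n 2) (comp3 n)"
proof -
  have t: "tr0 \<in> trans A3" "e01 \<in> trans A3" "tr1 \<in> trans A3" "e12 \<in> trans A3" "tr2 \<in> trans A3"
    by (simp_all add: A3_def)
  have p0: "gpath A3 0 (replicate n tr0) 0" using gpath_rep[of 0 "Some 0" "([aP], [])" A3 n] t by (simp add: tr0_def)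
  have p1: "gpath A3 1 (replicate n tr1) 1" using gpath_rep[of 1 "Some 1" "([aN], [aP])" A3 n] t by (simp add: tr1_def)
  have p2: "gpath A3 2 (replicate n tr2) 2" using gpath_rep[of 2 "Some 2" "([], [aN])" A3 n] t by (simp add: tr2_def)
  have pe1: "gpath A3 0 [e01] 1" using t by (auto simp: e01_def intro: gpath.intros)
  have pe2: "gpath A3 1 [e12] 2" using t by (auto simp: e12_def intro: gpath.intros)
  have path: "gpath A3 0 (comp3 n) 2" unfolding comp3_def
    by (intro gpath_append[OF p0] gpath_append[OF pe1] gpath_append[OF p1] gpath_append[OF pe2] p2)
  have rw: "read_word (comp3 n) = replicate n 0 @ replicate n 1 @ replicate n 2"
    by (simp add: comp3_def read_word_append tr0_def tr1_def tr2_def e01_def e12_def read_rep read_word_Cons read_word_Nil)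
  have "regf GG ([], []) (comp3 n) = ([], [])"
  proof -
    have a: "regf GG ([], []) (replicate n tr0) = (replicate n aP, [])" using ph1[of 0 n] by simp
    have b: "regf GG (replicate n aP, []) [e01] = (replicate (0 + n) aP, replicate 0 aP)"
      by (simp add: e01_def F2_mult rE del: foldr_replicate)
    have c: "regf GG (replicate (0 + n) aP, replicate 0 aP) (replicate n tr1) = ([], replicate n aP)"
      using ph2[of 0 n 0] by simp
    have d: "regf GG ([], replicate n aP) [e12] = ([], replicate (0 + n) aP)"
      by (simp add: e12_def F2_mult rE del: foldr_replicate)
    have e: "regf GG ([], replicate (0 + n) aP) (replicate n tr2) = ([], [])"
      using ph3[of 0 n] by simp
    show ?thesis unfolding comp3_def regf_append using a b c d e by simp
  qed
  then have "register GG (comp3 n) = \<one>\<^bsub>GG\<^esub>" by (simp add: register_alt F2_one)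
  then show ?thesis using path rw by (auto simp: accepting_comp_def A3_def)
qed

lemma comp3_len: "length (comp3 n) = length (replicate n (0::nat) @ replicate n 1 @ replicate n 2) + 2"
  by (simp add: comp3_def)

lemma L3_in_GG: "L3 \<in> weak_lin_class GG"
proof -
  have lang: "gaut_lang GG A3 = L3"
  proof
    show "gaut_lang GG A3 \<subseteq> L3" by (rule A3_lang_sub)
    show "L3 \<subseteq> gaut_lang GG A3"
      using comp3_acc by (auto simp: L3_def gaut_lang_def)
  qed
  have lb: "linear_bound (\<lambda>n. n + 2)" unfolding linear_bound_def by (intro exI[of _ 2]) simp
  have wtb: "weakly_time_bounded GG A3 (\<lambda>n. n + 2)"
    unfolding weakly_time_bounded_def lang
  proof
    fix w assume "w \<in> L3"
    then obtain n where w: "w = replicate n 0 @ replicate n 1 @ replicate n 2" by (auto simp: L3_def)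
    show "\<exists>ts. accepting_comp GG A3 w ts \<and> length ts \<le> length w + 2"
      using comp3_acc[of n] comp3_len[of n] w by auto
  qed
  show ?thesis unfolding weak_lin_class_def using A3_wf lang lb wtb by blast
qed



definition liftt :: "nat \<times> nat option \<times> nat \<times> f2letter list \<Rightarrow> nat \<times> nat option \<times> nat \<times> f2letter list \<times> f2letter list" where
  "liftt t = (fst t, fst (snd t), fst (snd (snd t)), snd (snd (snd t)), [])"

definition liftA :: "(nat, nat, f2letter list) gautomaton \<Rightarrow> (nat, nat, f2letter list \<times> f2letter list) gautomaton" where
  "liftA A = \<lparr>states = states A, alphabet = alphabet A, init = init A, accepting = accepting A,
      trans = liftt ` trans A\<rparr>"

lemma liftA_simps [simp]: "states (liftA A) = states A" "alphabet (liftA A) = alphabet A"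
  "init (liftA A) = init A" "accepting (liftA A) = accepting A" "trans (liftA A) = liftt ` trans A"
  by (simp_all add: liftA_def)

lemma lift_path1: "gpath A a ts b \<Longrightarrow> gpath (liftA A) a (map liftt ts) b"
proof (induction rule: gpath.induct)
  case (nil q) then show ?case by (simp add: gpath.nil)
next
  case (step q s q' m ts q'')
  have l: "liftt (q, s, q', m) = (q, s, q', m, [])" by (simp add: liftt_def)
  have "liftt (q, s, q', m) \<in> liftt ` trans A" using step(1) by blast
  then have "(q, s, q', m, []) \<in> trans (liftA A)" using l by simp
  then have "gpath (liftA A) q ((q, s, q', m, []) # map liftt ts) q''" using step(3) by (rule gpath.step)
  then show ?case using l by simp
qed

lemma lift_path2: "gpath (liftA A) a ts b \<Longrightarrow> \<exists>ts0. ts = map liftt ts0 \<and> gpath A a ts0 b"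
proof (induction rule: gpath.induct)
  case (nil q) then show ?case by (auto intro: gpath.nil)
next
  case (step q s q' m ts q'')
  then obtain t0 where t0: "t0 \<in> trans A" "liftt t0 = (q, s, q', m)" by auto
  obtain ts0 where ts0: "ts = map liftt ts0" "gpath A q' ts0 q''" using step by blast
  obtain a b c d where t0e: "t0 = (a, b, c, d)" by (cases t0) auto
  have "a = q" "b = s" "c = q'" using t0 t0e by (auto simp: liftt_def)
  then have "gpath A q (t0 # ts0) q''" using t0 t0e ts0 by (auto intro: gpath.step)
  then show ?case using t0 ts0 by (intro exI[of _ "t0 # ts0"]) simp
qed

lemma lift_read: "read_word (map liftt ts) = read_word ts"
proof (induction ts)
  case Nil then show ?case by (simp add: read_word_Nil)
next
  case (Cons t ts)
  obtain q s b m where t: "t = (q, s, b, m)" by (cases t) auto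
  then show ?case using Cons by (simp add: liftt_def read_word_Cons)
qed

lemma lift_regf: "regf (F2 \<times>\<times> F2) (a, []) (map liftt ts) = (regf F2 a ts, [])"
proof (induction ts arbitrary: a)
  case Nil then show ?case by simp
next
  case (Cons t ts)
  obtain q s b m where t: "t = (q, s, b, m)" by (cases t) auto
  show ?case using Cons[of "a \<otimes>\<^bsub>F2\<^esub> m"] t by (simp add: liftt_def F2_mult)
qed

lemma lift_register: "register (F2 \<times>\<times> F2) (map liftt ts) = (register F2 ts, [])"
  using lift_regf[of "[]" ts] by (simp add: register_alt F2_one)

lemma lift_acc: "accepting_comp (F2 \<times>\<times> F2) (liftA A) w ts \<longleftrightarrow> (\<exists>ts0. ts = map liftt ts0 \<and> accepting_comp F2 A w ts0)"
proof
  assume "accepting_comp (F2 \<times>\<times> F2) (liftA A) w ts"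
  then obtain q where p: "gpath (liftA A) (init A) ts q" "q \<in> accepting A" "read_word ts = w"
      "register (F2 \<times>\<times> F2) ts = \<one>\<^bsub>F2 \<times>\<times> F2\<^esub>" by (auto simp: accepting_comp_def)
  obtain ts0 where "ts = map liftt ts0" "gpath A (init A) ts0 q" using lift_path2[OF p(1)] by blast
  then show "\<exists>ts0. ts = map liftt ts0 \<and> accepting_comp F2 A w ts0"
    using p by (auto simp: accepting_comp_def lift_read lift_register F2_one)
next
  assume "\<exists>ts0. ts = map liftt ts0 \<and> accepting_comp F2 A w ts0"
  then obtain ts0 q where "ts = map liftt ts0" "gpath A (init A) ts0 q" "q \<in> accepting A" "read_word ts0 = w"
    "register F2 ts0 = \<one>\<^bsub>F2\<^esub>" by (auto simp: accepting_comp_def)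
  then show "accepting_comp (F2 \<times>\<times> F2) (liftA A) w ts"
    using lift_path1 by (fastforce simp: accepting_comp_def lift_read lift_register F2_one)
qed

lemma lift_lang: "gaut_lang (F2 \<times>\<times> F2) (liftA A) = gaut_lang F2 A"
  by (auto simp: gaut_lang_def lift_acc)

lemma lift_wf: "wf_gaut F2 A \<Longrightarrow> wf_gaut (F2 \<times>\<times> F2) (liftA A)"
  by (auto simp: wf_gaut_def liftt_def F2_carrier)

lemma lift_wtb: "weakly_time_bounded F2 A t \<Longrightarrow> weakly_time_bounded (F2 \<times>\<times> F2) (liftA A) t"
  unfolding weakly_time_bounded_def lift_lang
proof
  fix w assume h: "\<forall>w\<in>gaut_lang F2 A. \<exists>ts. accepting_comp F2 A w ts \<and> length ts \<le> t (length w)"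
    and w: "w \<in> gaut_lang F2 A"
  then obtain ts where "accepting_comp F2 A w ts" "length ts \<le> t (length w)" by blast
  then show "\<exists>ts. accepting_comp (F2 \<times>\<times> F2) (liftA A) w ts \<and> length ts \<le> t (length w)"
    by (intro exI[of _ "map liftt ts"]) (auto simp: lift_acc)
qed

lemma incl: "(weak_lin_class F2 :: nat list set set) \<subseteq> weak_lin_class (F2 \<times>\<times> F2)"
proof
  fix L :: "nat list set" assume "L \<in> weak_lin_class F2"
  then obtain A :: "(nat, nat, f2letter list) gautomaton" and t where
    h: "wf_gaut F2 A" "gaut_lang F2 A = L" "linear_bound t" "weakly_time_bounded F2 A t"
    by (auto simp: weak_lin_class_def)
  then show "L \<in> weak_lin_class (F2 \<times>\<times> F2)"
    unfolding weak_lin_class_def using lift_wf lift_lang lift_wtb by blast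
qed

theorem theorem4p15:
  shows "(weak_lin_class F2 :: nat list set set) \<subset> weak_lin_class (F2 \<times>\<times> F2)"
proof -
  have "L3 \<notin> weak_lin_class F2"
  proof
    assume "L3 \<in> weak_lin_class F2"
    then obtain A :: "(nat, nat, f2letter list) gautomaton" where "wf_gaut F2 A" "gaut_lang F2 A = L3"
      by (auto simp: weak_lin_class_def)
    then show False by (rule L3_not_F2)
  qed
  then show ?thesis using incl L3_in_GG by blast
qed

end
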